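(* Let $q$ be a prime power, $t\ge1$, $s<t$ a nonnegative integer, and $W=\{0,w_1,\dots,w_{q^s-1}\}$ an $\mathbb{F}_q$-subspace of $\mathbb{F}_{q^t}$ of dimension $s$. Let $A\subseteq\mathbb{F}_{q^t}$, $\alpha^*\in A$, let $\{\beta_1,\dots,\beta_t\}$ be an arbitrary $\mathbb{F}_q$-basis of $\mathbb{F}_{q^t}$, and for $i=1,\dots,t$ let \[ g_i(x)=\beta_i\prod_{j=1}^{q^s-1}\Big(x-\big(\alpha^*-w_j^{-1}\beta_i\big)\Big). \] Then for every $\alpha\in A\setminus\{\alpha^*\}$, the set $\{g_1(\alpha),\dots,g_t(\alpha)\}$ has rank at most $t-s$ over $\mathbb{F}_q$. *)

theory Defs
  imports Main "HOL-Computational_Algebra.Primes"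
begin

definition is_subfield :: "'a::field set \<Rightarrow> bool" where
  "is_subfield F \<longleftrightarrow> 0 \<in> F \<and> 1 \<in> F \<and> (\<forall>x\<in>F. \<forall>y\<in>F. x + y \<in> F \<and> x * y \<in> F)
     \<and> (\<forall>x\<in>F. - x \<in> F \<and> inverse x \<in> F)"

definition F_span :: "'a::field set \<Rightarrow> 'a set \<Rightarrow> 'a set" where
  "F_span F S = {(\<Sum>v\<in>T. c v * v) | T c. finite T \<and> T \<subseteq> S \<and> (\<forall>v\<in>T. c v \<in> F)}"

definition F_independent :: "'a::field set \<Rightarrow> 'a set \<Rightarrow> bool" where
  "F_independent F S \<longleftrightarrow> finite S \<and>
     (\<forall>c. (\<forall>v\<in>S. c v \<in> F) \<and> (\<Sum>v\<in>S. c v * v) = 0 \<longrightarrow> (\<forall>v\<in>S. c v = 0))"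

definition F_subspace :: "'a::field set \<Rightarrow> 'a set \<Rightarrow> bool" where
  "F_subspace F W \<longleftrightarrow> 0 \<in> W \<and> (\<forall>x\<in>W. \<forall>y\<in>W. x + y \<in> W) \<and> (\<forall>c\<in>F. \<forall>x\<in>W. c * x \<in> W)"

definition F_basis :: "'a::field set \<Rightarrow> 'a set \<Rightarrow> 'a set \<Rightarrow> bool" where
  "F_basis F B W \<longleftrightarrow> B \<subseteq> W \<and> F_independent F B \<and> F_span F B = W"

definition F_dim_eq :: "'a::field set \<Rightarrow> 'a set \<Rightarrow> nat \<Rightarrow> bool" where
  "F_dim_eq F W n \<longleftrightarrow> (\<exists>B. F_basis F B W \<and> card B = n)"

definition F_rank :: "'a::field set \<Rightarrow> 'a set \<Rightarrow> nat" where
  "F_rank F S = Max {card T | T. T \<subseteq> S \<and> F_independent F T}"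

end

theory Submission imports Defs "HOL-Computational_Algebra.Polynomial" "HOL-Library.FuncSet" begin

lemma lin_prod_props:
  fixes V :: "'a::field set"
  assumes "finite V"
  shows "degree (\<Prod>v\<in>V. [:y - v, 1:]) = card V \<and> coeff (\<Prod>v\<in>V. [:y - v, 1:]) (card V) = 1"
proof -
  have d: "degree (\<Prod>v\<in>V. [:y - v, 1:]) = card V"
    by (subst degree_prod_eq_sum_degree) auto
  have "lead_coeff (\<Prod>v\<in>V. [:y - v, 1:]) = 1"
    by (simp add: lead_coeff_prod)
  with d show ?thesis by simp
qed

lemma subspace_poly_add:
  fixes V :: "'a::field set"
  assumes fin: "finite V" and z: "0 \<in> V" and add: "\<forall>a\<in>V. \<forall>b\<in>V. a + b \<in> V"
    and neg: "\<forall>a\<in>V. - a \<in> V"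
  shows "(\<Prod>v\<in>V. (x + y - v)) = (\<Prod>v\<in>V. (x - v)) + (\<Prod>v\<in>V. (y - v))"
proof -
  define n where "n = card V"
  have n1: "n \<ge> 1" using fin z n_def by (metis One_nat_def Suc_leI card_gt_0_iff empty_iff)
  define Q where "Q = (\<Prod>v\<in>V. [:y - v, 1:]) - (\<Prod>v\<in>V. [:0 - v, 1:]) - [:\<Prod>v\<in>V. (y - v):]"
  have c1: "\<And>i. i > n \<Longrightarrow> coeff (\<Prod>v\<in>V. [:y - v, 1:]) i = 0"
    using lin_prod_props[OF fin, of y] n_def by (simp add: coeff_eq_0)
  have c2: "\<And>i. i > n \<Longrightarrow> coeff (\<Prod>v\<in>V. [:0 - v, 1:]) i = 0"
    using lin_prod_props[OF fin, of 0] n_def by (simp add: coeff_eq_0)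
  have cn: "coeff Q n = 0"
    using lin_prod_props[OF fin, of y] lin_prod_props[OF fin, of 0] n_def n1
    by (simp add: Q_def coeff_pCons split: nat.split)
  have "\<forall>i>n - 1. coeff Q i = 0"
  proof (intro allI impI)
    fix i assume "i > n - 1"
    then have "i = n \<or> i > n" by auto
    then show "coeff Q i = 0"
    proof
      assume "i > n" then show ?thesis using c1[of i] c2[of i] n1 by (simp add: Q_def coeff_pCons split: nat.split)
    qed (use cn in simp)
  qed
  then have dQ: "degree Q \<le> n - 1" by (simp add: degree_le)
  have roots: "V \<subseteq> {x. poly Q x = 0}"
  proof
    fix x assume xV: "x \<in> V"
    have p1: "poly (\<Prod>v\<in>V. [:y - v, 1:]) x = (\<Prod>v\<in>V. (y - v))"
      unfolding poly_prod
      apply (rule prod.reindex_bij_witness[where i="\<lambda>u. u + x" and j="\<lambda>v. v - x"])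
      using xV add neg by (auto simp: algebra_simps)
         (metis diff_conv_add_uminus)
    have p2: "poly (\<Prod>v\<in>V. [:0 - v, 1:]) x = 0"
      unfolding poly_prod using xV fin by (intro prod_zero) (auto intro!: bexI[of _ x])
    show "x \<in> {x. poly Q x = 0}" using p2 by (simp add: Q_def p1)
  qed
  have "Q = 0"
  proof (rule ccontr)
    assume "Q \<noteq> 0"
    then have "card {x. poly Q x = 0} \<le> degree Q" by (rule card_poly_roots_bound)
    moreover have "n \<le> card {x. poly Q x = 0}"
      unfolding n_def
      by (rule card_mono[OF _ roots]) (use \<open>Q \<noteq> 0\<close> poly_roots_finite in blast)
    ultimately show False using dQ n1 by linarith
  qed
  then have "poly Q x = 0" by simp
  then show ?thesis by (simp add: Q_def poly_prod algebra_simps)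
qed

lemma indep_card_span:
  fixes F :: "'a::field set"
  assumes sf: "is_subfield F" and finF: "finite F" and ind: "F_independent F B"
  shows "card (F_span F B) = card F ^ card B"
proof -
  have finB: "finite B" using ind unfolding F_independent_def by simp
  define \<phi> where "\<phi> = (\<lambda>c. \<Sum>v\<in>B. c v * v)"
  have "bij_betw \<phi> (PiE B (\<lambda>_. F)) (F_span F B)"
    unfolding bij_betw_def
  proof (intro conjI)
    show "inj_on \<phi> (PiE B (\<lambda>_. F))"
    proof (rule inj_onI)
      fix c d assume c: "c \<in> PiE B (\<lambda>_. F)" and d: "d \<in> PiE B (\<lambda>_. F)" and e: "\<phi> c = \<phi> d"
      have "(\<Sum>v\<in>B. (c v - d v) * v) = 0"
        using e by (simp add: \<phi>_def left_diff_distrib sum_subtractf)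
      moreover have "\<forall>v\<in>B. c v - d v \<in> F"
        using c d sf unfolding is_subfield_def by (auto simp: PiE_iff) (metis diff_conv_add_uminus)
      ultimately have "\<forall>v\<in>B. c v - d v = 0"
        using ind unfolding F_independent_def
        apply (elim conjE) apply (drule spec[of _ "\<lambda>v. c v - d v"]) by simp
      then show "c = d" using c d by (intro PiE_ext) auto
    qed
    show "\<phi> ` PiE B (\<lambda>_. F) = F_span F B"
    proof
      show "\<phi> ` PiE B (\<lambda>_. F) \<subseteq> F_span F B"
        unfolding F_span_def \<phi>_def using finB by (auto simp: PiE_iff)
      show "F_span F B \<subseteq> \<phi> ` PiE B (\<lambda>_. F)"
      proof
        fix x assume "x \<in> F_span F B"
        then obtain T c where x: "x = (\<Sum>v\<in>T. c v * v)" and T: "finite T" "T \<subseteq> B" "\<forall>v\<in>T. c v \<in> F"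
          unfolding F_span_def by blast
        define d where "d = (\<lambda>v. if v \<in> B then (if v \<in> T then c v else 0) else undefined)"
        have "d \<in> PiE B (\<lambda>_. F)" using T sf unfolding d_def is_subfield_def by (auto simp: PiE_iff extensional_def)
        moreover have "\<phi> d = x"
          unfolding \<phi>_def x d_def using T finB
          by (intro sum.mono_neutral_cong_right) auto
        ultimately show "x \<in> \<phi> ` PiE B (\<lambda>_. F)" by blast
      qed
    qed
  qed
  then have "card (F_span F B) = card (PiE B (\<lambda>_. F))" by (simp add: bij_betw_same_card)
  also have "\<dots> = card F ^ card B" using finB by (simp add: card_PiE)
  finally show ?thesis .
qed

lemma subfield_pow:
  fixes F :: "'a::field set"
  assumes sf: "is_subfield F" and finF: "finite F" and c: "c \<in> F"
  shows "c ^ card F = c"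
proof (cases "c = 0")
  case True
  have "card F > 0" using sf finF unfolding is_subfield_def by (auto simp: card_gt_0_iff)
  then show ?thesis using True by simp
next
  case False
  define F' where "F' = F - {0}"
  have fin': "finite F'" using finF F'_def by simp
  have "(\<Prod>x\<in>F'. c * x) = (\<Prod>x\<in>F'. x)"
    apply (rule prod.reindex_bij_witness[where i="\<lambda>u. inverse c * u" and j="\<lambda>v. c * v"])
    using sf c False unfolding F'_def is_subfield_def by auto
  then have "c ^ card F' * (\<Prod>x\<in>F'. x) = 1 * (\<Prod>x\<in>F'. x)"
    by (simp add: prod.distrib)
  moreover have "(\<Prod>x\<in>F'. x) \<noteq> 0" using fin' unfolding F'_def by simp
  ultimately have "c ^ card F' = 1" by (metis mult_right_cancel)
  moreover have "card F = Suc (card F')"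
  proof -
    have "card F > 0" using sf finF unfolding is_subfield_def by (auto simp: card_gt_0_iff)
    then show ?thesis using sf finF unfolding F'_def is_subfield_def by (simp add: card_Diff_singleton)
  qed
  ultimately show ?thesis by simp
qed

lemma subfield_pow_iter:
  fixes F :: "'a::field set"
  assumes sf: "is_subfield F" and finF: "finite F" and c: "c \<in> F"
  shows "c ^ (card F ^ n) = c"
proof (induction n)
  case 0 then show ?case by simp
next
  case (Suc n)
  have "c ^ (card F ^ Suc n) = (c ^ card F) ^ (card F ^ n)" by (simp add: power_mult)
  then show ?case using subfield_pow[OF assms] Suc by simp
qed

lemma span_sub_subspace:
  fixes F :: "'a::field set"
  assumes U: "F_subspace F U" and T: "T \<subseteq> U"
  shows "F_span F T \<subseteq> U"
proof
  fix x assume "x \<in> F_span F T"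
  then obtain S c where x: "x = (\<Sum>v\<in>S. c v * v)" and S: "finite S" "S \<subseteq> T" "\<forall>v\<in>S. c v \<in> F"
    unfolding F_span_def by blast
  have "S \<subseteq> U \<Longrightarrow> \<forall>v\<in>S. c v \<in> F \<Longrightarrow> (\<Sum>v\<in>S. c v * v) \<in> U"
    using S(1)
  proof (induction S rule: finite_induct)
    case empty then show ?case using U unfolding F_subspace_def by simp
  next
    case (insert a S)
    then show ?case using U unfolding F_subspace_def by simp
  qed
  then show "x \<in> U" using x S T by blast
qed

theorem lemma6:
  fixes Fq :: "'a::{field,finite} set"
    and q t s :: nat
    and W A :: "'a set"
    and \<alpha>star :: 'a
    and \<beta> :: "nat \<Rightarrow> 'a"
  assumes q_pp: "\<exists>p k. prime p \<and> k \<ge> 1 \<and> q = p ^ k"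
    and t_ge: "t \<ge> 1" and s_lt: "s < t"
    and card_K: "card (UNIV :: 'a set) = q ^ t"
    and Fq_sub: "is_subfield Fq" and card_Fq: "card Fq = q"
    and W_sub: "F_subspace Fq W" and W_dim: "F_dim_eq Fq W s"
    and A_sub: "\<alpha>star \<in> A"
    and \<beta>_inj: "inj_on \<beta> {1..t}"
    and \<beta>_basis: "F_basis Fq (\<beta> ` {1..t}) UNIV"
  shows "\<forall>\<alpha>\<in>A - {\<alpha>star}.
           F_rank Fq ((\<lambda>i. \<beta> i * (\<Prod>w\<in>W - {0}. (\<alpha> - (\<alpha>star - inverse w * \<beta> i)))) ` {1..t})
             \<le> t - s"
proof
  fix \<alpha> assume \<alpha>: "\<alpha> \<in> A - {\<alpha>star}"
  define \<gamma> where "\<gamma> = \<alpha> - \<alpha>star"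
  have \<gamma>0: "\<gamma> \<noteq> 0" using \<alpha> \<gamma>_def by auto
  have finFq: "finite Fq" by simp
  have F0: "0 \<in> Fq" and F1: "1 \<in> Fq" and Fm1: "-1 \<in> Fq"
    and Finv: "\<And>c. c \<in> Fq \<Longrightarrow> inverse c \<in> Fq"
    using Fq_sub unfolding is_subfield_def by auto
  have W0: "0 \<in> W" and Wadd: "\<And>x y. x \<in> W \<Longrightarrow> y \<in> W \<Longrightarrow> x + y \<in> W"
    and Wsc: "\<And>c x. c \<in> Fq \<Longrightarrow> x \<in> W \<Longrightarrow> c * x \<in> W"
    using W_sub unfolding F_subspace_def by auto
  have Wneg: "\<And>x. x \<in> W \<Longrightarrow> - x \<in> W" using Wsc[OF Fm1] by fastforce
  have q2: "q \<ge> 2"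
  proof -
    have "card {0, 1::'a} \<le> card Fq" using F0 F1 by (intro card_mono) auto
    then show ?thesis using card_Fq by simp
  qed
  obtain B where B: "F_basis Fq B W" "card B = s" using W_dim unfolding F_dim_eq_def by blast
  have cardW: "card W = q ^ s"
    using indep_card_span[OF Fq_sub finFq, of B] B card_Fq unfolding F_basis_def by simp
  define V where "V = (\<lambda>w. \<gamma> * w) ` W"
  have cardV: "card V = q ^ s" unfolding V_def using cardW \<gamma>0
    by (subst card_image) (auto simp: inj_on_def)
  have V0: "0 \<in> V" unfolding V_def using W0 by force
  have Vadd: "\<forall>a\<in>V. \<forall>b\<in>V. a + b \<in> V"
  proof (intro ballI)
    fix a b assume "a \<in> V" "b \<in> V"
    then obtain x y where xy: "x \<in> W" "y \<in> W" "a = \<gamma> * x" "b = \<gamma> * y" unfolding V_def by blast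
    then have "a + b = \<gamma> * (x + y)" by (simp add: distrib_left)
    then show "a + b \<in> V" unfolding V_def using Wadd xy by blast
  qed
  have Vneg: "\<forall>a\<in>V. - a \<in> V"
  proof
    fix a assume "a \<in> V"
    then obtain x where x: "x \<in> W" "a = \<gamma> * x" unfolding V_def by blast
    then have "- a = \<gamma> * (- x)" by simp
    then show "- a \<in> V" unfolding V_def using Wneg x by blast
  qed
  have Vsc: "\<And>c v. c \<in> Fq \<Longrightarrow> v \<in> V \<Longrightarrow> c * v \<in> V"
  proof -
    fix c v assume c: "c \<in> Fq" and "v \<in> V"
    then obtain x where x: "x \<in> W" "v = \<gamma> * x" unfolding V_def by blast
    then have "c * v = \<gamma> * (c * x)" by (simp add: mult.left_commute)
    then show "c * v \<in> V" unfolding V_def using Wsc[OF c] x by blast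
  qed
  define M where "M = (\<lambda>x. \<Prod>v\<in>V. (x - v))"
  have Madd: "\<And>x y. M (x + y) = M x + M y"
    unfolding M_def by (rule subspace_poly_add) (use V0 Vadd Vneg in auto)
  have Mz: "\<And>x. M x = 0 \<longleftrightarrow> x \<in> V" unfolding M_def by auto
  have Msc: "\<And>c x. c \<in> Fq \<Longrightarrow> M (c * x) = c * M x"
  proof -
    fix c x assume c: "c \<in> Fq"
    show "M (c * x) = c * M x"
    proof (cases "c = 0")
      case True then show ?thesis using Mz V0 by simp
    next
      case False
      have "M (c * x) = (\<Prod>u\<in>V. c * x - c * u)"
        unfolding M_def
        apply (rule prod.reindex_bij_witness[symmetric, where i="\<lambda>v. inverse c * v" and j="\<lambda>u. c * u"])
        using False Vsc c Finv by auto
      also have "\<dots> = (\<Prod>u\<in>V. c * (x - u))" by (simp add: right_diff_distrib)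
      also have "\<dots> = c ^ card V * M x" unfolding M_def by (simp add: prod.distrib)
      also have "c ^ card V = c" using cardV card_Fq subfield_pow_iter[OF Fq_sub finFq c] by simp
      finally show ?thesis .
    qed
  qed
  have Mfib: "\<And>x0. M -` {M x0} = (\<lambda>v. x0 + v) ` V"
  proof
    fix x0
    show "M -` {M x0} \<subseteq> (\<lambda>v. x0 + v) ` V"
    proof
      fix y assume "y \<in> M -` {M x0}"
      then have "M y = M x0" by simp
      moreover have "M y = M (y - x0) + M x0" using Madd[of "y - x0" x0] by simp
      ultimately have "y - x0 \<in> V" using Mz by simp
      then show "y \<in> (\<lambda>v. x0 + v) ` V" by (auto simp: image_iff intro!: bexI[of _ "y - x0"])
    qed
    show "(\<lambda>v. x0 + v) ` V \<subseteq> M -` {M x0}" using Madd Mz by auto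
  qed
  have cardUNIV: "card (UNIV :: 'a set) = card (M ` UNIV) * card V"
  proof -
    have e: "(UNIV :: 'a set) = (\<Union>z\<in>M ` UNIV. M -` {z})" by auto
    have "card (UNIV :: 'a set) = card (\<Union>z\<in>M ` UNIV. M -` {z})" by (rule arg_cong[OF e])
    also have "\<dots> = (\<Sum>z\<in>M ` UNIV. card (M -` {z}))"
      by (rule card_UN_disjoint) auto
    also have "\<dots> = (\<Sum>z\<in>M ` UNIV. card V)"
    proof (rule sum.cong)
      fix z assume "z \<in> M ` UNIV"
      then obtain x0 where "z = M x0" by blast
      then show "card (M -` {z}) = card V" using Mfib[of x0] by (simp add: card_image)
    qed simp
    finally show ?thesis by simp
  qed
  define C where "C = (\<Prod>w\<in>W - {0}. inverse w)"
  have C0: "C \<noteq> 0" unfolding C_def by simp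
  have gform: "\<And>b. b * (\<Prod>w\<in>W - {0}. (\<alpha> - (\<alpha>star - inverse w * b))) = C * M b"
  proof -
    fix b
    have "(\<Prod>w\<in>W - {0}. (\<alpha> - (\<alpha>star - inverse w * b))) = (\<Prod>w\<in>W - {0}. inverse w * (b + \<gamma> * w))"
    proof (rule prod.cong)
      fix w assume w: "w \<in> W - {0}"
      have "inverse w * (b + \<gamma> * w) = inverse w * b + \<gamma> * (inverse w * w)" by (simp add: algebra_simps)
      also have "\<dots> = inverse w * b + \<gamma>" using w by simp
      also have "\<dots> = \<alpha> - (\<alpha>star - inverse w * b)" by (simp add: \<gamma>_def)
      finally show "\<alpha> - (\<alpha>star - inverse w * b) = inverse w * (b + \<gamma> * w)" by simp
    qed simp
    also have "\<dots> = C * (\<Prod>w\<in>W - {0}. (b + \<gamma> * w))" unfolding C_def by (simp add: prod.distrib)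
    finally have "b * (\<Prod>w\<in>W - {0}. (\<alpha> - (\<alpha>star - inverse w * b))) = C * ((b + \<gamma> * 0) * (\<Prod>w\<in>W - {0}. (b + \<gamma> * w)))"
      by simp
    also have "(b + \<gamma> * 0) * (\<Prod>w\<in>W - {0}. (b + \<gamma> * w)) = (\<Prod>w\<in>W. (b + \<gamma> * w))"
      using W0 by (simp add: prod.remove[of W 0])
    also have "\<dots> = (\<Prod>w\<in>W. (b - \<gamma> * w))"
      apply (rule prod.reindex_bij_witness[where i="\<lambda>u. - u" and j="\<lambda>u. - u"])
      using Wneg by auto
    also have "\<dots> = M b" unfolding M_def V_def using \<gamma>0
      by (subst prod.reindex) (auto simp: inj_on_def)
    finally show "b * (\<Prod>w\<in>W - {0}. (\<alpha> - (\<alpha>star - inverse w * b))) = C * M b" .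
  qed
  define U where "U = (\<lambda>x. C * M x) ` UNIV"
  have Usub: "F_subspace Fq U"
    unfolding F_subspace_def
  proof (intro conjI ballI)
    show "0 \<in> U" unfolding U_def using Mz V0 by (metis mult_zero_right rangeI)
  next
    fix x y assume "x \<in> U" "y \<in> U"
    then obtain a b where "x = C * M a" "y = C * M b" unfolding U_def by blast
    then have "x + y = C * M (a + b)" using Madd by (simp add: distrib_left)
    then show "x + y \<in> U" unfolding U_def by blast
  next
    fix c x assume c: "c \<in> Fq" "x \<in> U"
    then obtain a where "x = C * M a" unfolding U_def by blast
    then have "c * x = C * M (c * a)" using Msc[OF c(1)] by (simp add: mult.left_commute)
    then show "c * x \<in> U" unfolding U_def by blast
  qed
  have cardU: "card U = card (M ` UNIV)"
  proof -
    have "U = (\<lambda>z. C * z) ` (M ` UNIV)" by (simp add: U_def image_image)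
    moreover have "inj_on (\<lambda>z. C * z) (M ` UNIV)" using C0 by (auto simp: inj_on_def)
    ultimately show ?thesis by (simp add: card_image)
  qed
  have cardU2: "card U = q ^ (t - s)"
  proof -
    have qt: "q ^ t = q ^ (t - s) * q ^ s" using s_lt by (metis le_add_diff_inverse2 less_imp_le power_add)
    have "card U * q ^ s = q ^ t" using cardUNIV cardU cardV card_K by simp
    then have "card U * q ^ s = q ^ (t - s) * q ^ s" using qt by simp
    then show ?thesis using q2 by simp
  qed
  define S where "S = (\<lambda>i. \<beta> i * (\<Prod>w\<in>W - {0}. (\<alpha> - (\<alpha>star - inverse w * \<beta> i)))) ` {1..t}"
  have SU: "S \<subseteq> U" unfolding S_def U_def using gform by auto
  have bound: "\<And>T. T \<subseteq> S \<Longrightarrow> F_independent Fq T \<Longrightarrow> card T \<le> t - s"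
  proof -
    fix T assume T: "T \<subseteq> S" "F_independent Fq T"
    have "q ^ card T = card (F_span Fq T)" using indep_card_span[OF Fq_sub finFq T(2)] card_Fq by simp
    also have "\<dots> \<le> card U" using span_sub_subspace[OF Usub] T SU by (intro card_mono) auto
    finally have "q ^ card T \<le> q ^ (t - s)" using cardU2 by simp
    moreover have "1 < q" using q2 by simp
    ultimately show "card T \<le> t - s" by (rule power_le_imp_le_exp[rotated])
  qed
  have "F_independent Fq {}" unfolding F_independent_def by simp
  then have ne: "{card T | T. T \<subseteq> S \<and> F_independent Fq T} \<noteq> {}" by blast
  have fin: "finite {card T | T. T \<subseteq> S \<and> F_independent Fq T}"
    by (rule finite_subset[of _ "card ` Pow S"]) auto
  have "F_rank Fq S \<le> t - s" unfolding F_rank_def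
    using ne fin bound by (intro Max.boundedI) auto
  then show "F_rank Fq ((\<lambda>i. \<beta> i * (\<Prod>w\<in>W - {0}. (\<alpha> - (\<alpha>star - inverse w * \<beta> i)))) ` {1..t}) \<le> t - s"
    unfolding S_def .
qed

end
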